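(* There exists a set of $1932$ unit vectors in $\mathbb{R}^{14}$ such that the inner product of any two distinct vectors lies in $\{0,\pm\tfrac14,\pm\tfrac12,-1\}$. In particular the kissing number in dimension $14$ is at least $1932$.
   Context: The kissing number in dimension $d$ is the maximal number of unit vectors in $\mathbb{R}^d$ with pairwise inner products at most $1/2$. *)

theory Defs
  imports "HOL-Analysis.Analysis" "HOL-Library.Numeral_Type"
begin

definition kissing_config :: "'a::real_inner set \<Rightarrow> bool" where
  "kissing_config S \<longleftrightarrow> (\<forall>x\<in>S. norm x = 1) \<and>
     (\<forall>x\<in>S. \<forall>y\<in>S. x \<noteq> y \<longrightarrow> inner x y \<le> 1/2)"

definition kissing_number :: "'a::euclidean_space itself \<Rightarrow> nat" where
  "kissing_number _ = Sup {card S | S :: 'a set. finite S \<and> kissing_config S}"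

end

theory Submission
  imports Defs
begin

definition Lr :: "int list list" where
  "Lr = [[2,0,0,0,0,0,0],
    [0,2,0,0,0,0,0],
    [0,0,2,0,0,0,0],
    [0,0,0,2,0,0,0],
    [0,0,0,0,2,0,0],
    [0,0,0,0,0,2,0],
    [0,0,0,0,0,0,2],
    [0,0,1,0,1,1,1],
    [0,0,1,0,1,1,-1],
    [0,0,1,0,1,-1,1],
    [0,0,1,0,1,-1,-1],
    [0,0,1,0,-1,1,1],
    [0,0,1,0,-1,1,-1],
    [0,0,1,0,-1,-1,1],
    [0,0,1,0,-1,-1,-1],
    [1,0,0,1,0,1,1],
    [1,0,0,1,0,1,-1],
    [1,0,0,1,0,-1,1],
    [1,0,0,1,0,-1,-1],
    [1,0,0,-1,0,1,1],
    [1,0,0,-1,0,1,-1],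
    [1,0,0,-1,0,-1,1],
    [1,0,0,-1,0,-1,-1],
    [1,1,0,0,1,0,1],
    [1,1,0,0,1,0,-1],
    [1,1,0,0,-1,0,1],
    [1,1,0,0,-1,0,-1],
    [1,-1,0,0,1,0,1],
    [1,-1,0,0,1,0,-1],
    [1,-1,0,0,-1,0,1],
    [1,-1,0,0,-1,0,-1],
    [1,1,1,0,0,1,0],
    [1,1,1,0,0,-1,0],
    [1,1,-1,0,0,1,0],
    [1,1,-1,0,0,-1,0],
    [1,-1,1,0,0,1,0],
    [1,-1,1,0,0,-1,0],
    [1,-1,-1,0,0,1,0],
    [1,-1,-1,0,0,-1,0],
    [0,1,1,1,0,0,1],
    [0,1,1,1,0,0,-1],
    [0,1,1,-1,0,0,1],
    [0,1,1,-1,0,0,-1],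
    [0,1,-1,1,0,0,1],
    [0,1,-1,1,0,0,-1],
    [0,1,-1,-1,0,0,1],
    [0,1,-1,-1,0,0,-1],
    [1,0,1,1,1,0,0],
    [1,0,1,1,-1,0,0],
    [1,0,1,-1,1,0,0],
    [1,0,1,-1,-1,0,0],
    [1,0,-1,1,1,0,0],
    [1,0,-1,1,-1,0,0],
    [1,0,-1,-1,1,0,0],
    [1,0,-1,-1,-1,0,0],
    [0,1,0,1,1,1,0],
    [0,1,0,1,1,-1,0],
    [0,1,0,1,-1,1,0],
    [0,1,0,1,-1,-1,0],
    [0,1,0,-1,1,1,0],
    [0,1,0,-1,1,-1,0],
    [0,1,0,-1,-1,1,0],
    [0,1,0,-1,-1,-1,0]]"

definition Nl :: "(int list \<times> int list list) list" where
  "Nl = [([2,0,0,0,0,0,0], [[2,0,0,0,0,0,0],[0,0,1,0,1,1,1],[0,0,1,0,-1,-1,1],[0,1,1,-1,0,0,-1],[0,1,-1,-1,0,0,1],[0,1,0,1,1,-1,0],[0,1,0,1,-1,1,0]]),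
    ([0,2,0,0,0,0,0], [[0,2,0,0,0,0,0],[0,0,1,0,-1,1,-1],[0,0,1,0,-1,-1,1],[1,0,0,-1,0,1,1],[1,0,0,-1,0,-1,-1],[1,0,1,1,1,0,0],[1,0,-1,1,-1,0,0]]),
    ([0,0,2,0,0,0,0], [[0,0,2,0,0,0,0],[1,0,0,1,0,-1,1],[1,0,0,-1,0,1,1],[1,1,0,0,1,0,-1],[1,-1,0,0,-1,0,-1],[0,1,0,1,-1,1,0],[0,1,0,-1,-1,-1,0]]),
    ([0,0,0,2,0,0,0], [[0,0,0,2,0,0,0],[0,0,1,0,1,-1,-1],[0,0,1,0,-1,-1,1],[1,-1,0,0,1,0,1],[1,-1,0,0,-1,0,-1],[1,1,1,0,0,1,0],[1,1,-1,0,0,-1,0]]),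
    ([0,0,0,0,2,0,0], [[0,0,0,0,2,0,0],[1,0,0,1,0,1,-1],[1,0,0,-1,0,1,1],[1,1,-1,0,0,-1,0],[1,-1,1,0,0,-1,0],[0,1,1,1,0,0,1],[0,1,1,-1,0,0,-1]]),
    ([0,0,0,0,0,2,0], [[0,0,0,0,0,2,0],[1,1,0,0,-1,0,1],[1,-1,0,0,-1,0,-1],[0,1,1,-1,0,0,-1],[0,1,-1,1,0,0,-1],[1,0,1,1,1,0,0],[1,0,-1,-1,1,0,0]]),
    ([0,0,0,0,0,0,2], [[0,0,0,0,0,0,2],[1,1,-1,0,0,-1,0],[1,-1,-1,0,0,1,0],[1,0,1,1,1,0,0],[1,0,1,-1,-1,0,0],[0,1,0,1,-1,1,0],[0,1,0,-1,1,1,0]]),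
    ([0,0,1,0,1,1,1], [[2,0,0,0,0,0,0],[0,0,1,0,1,1,1],[0,0,1,0,-1,-1,1],[0,1,1,1,0,0,-1],[0,1,-1,1,0,0,1],[0,1,0,-1,1,-1,0],[0,1,0,-1,-1,1,0]]),
    ([0,0,1,0,1,1,-1], [[0,0,1,0,1,1,-1],[1,0,0,-1,0,-1,-1],[1,-1,0,0,1,0,1],[1,1,-1,0,0,1,0],[0,1,1,-1,0,0,1],[1,0,1,1,-1,0,0],[0,1,0,1,1,-1,0]]),
    ([0,0,1,0,1,-1,1], [[0,0,1,0,1,-1,1],[1,0,0,-1,0,-1,-1],[1,-1,0,0,-1,0,1],[1,1,1,0,0,1,0],[0,1,-1,-1,0,0,1],[1,0,-1,1,1,0,0],[0,1,0,1,-1,-1,0]]),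
    ([0,0,1,0,1,-1,-1], [[0,0,0,2,0,0,0],[0,0,1,0,1,-1,-1],[0,0,1,0,-1,-1,1],[1,1,0,0,1,0,1],[1,1,0,0,-1,0,-1],[1,-1,1,0,0,1,0],[1,-1,-1,0,0,-1,0]]),
    ([0,0,1,0,-1,1,1], [[0,0,1,0,-1,1,1],[1,0,0,-1,0,1,-1],[1,-1,0,0,1,0,1],[1,1,1,0,0,-1,0],[0,1,-1,-1,0,0,1],[1,0,-1,1,-1,0,0],[0,1,0,1,1,1,0]]),
    ([0,0,1,0,-1,1,-1], [[0,2,0,0,0,0,0],[0,0,1,0,-1,1,-1],[0,0,1,0,-1,-1,1],[1,0,0,1,0,1,1],[1,0,0,1,0,-1,-1],[1,0,1,-1,1,0,0],[1,0,-1,-1,-1,0,0]]),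
    ([0,0,1,0,-1,-1,1], [[2,0,0,0,0,0,0],[0,2,0,0,0,0,0],[0,0,0,2,0,0,0],[0,0,1,0,1,1,1],[0,0,1,0,1,-1,-1],[0,0,1,0,-1,1,-1],[0,0,1,0,-1,-1,1]]),
    ([0,0,1,0,-1,-1,-1], [[0,0,1,0,-1,-1,-1],[1,0,0,-1,0,-1,1],[1,-1,0,0,1,0,-1],[1,1,1,0,0,1,0],[0,1,-1,-1,0,0,-1],[1,0,-1,1,-1,0,0],[0,1,0,1,1,-1,0]]),
    ([1,0,0,1,0,1,1], [[0,0,1,0,-1,1,-1],[1,0,0,1,0,1,1],[1,1,0,0,1,0,-1],[1,-1,1,0,0,-1,0],[0,1,1,-1,0,0,1],[1,0,-1,-1,-1,0,0],[0,1,0,1,-1,-1,0]]),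
    ([1,0,0,1,0,1,-1], [[0,0,0,0,2,0,0],[1,0,0,1,0,1,-1],[1,0,0,-1,0,1,1],[1,1,1,0,0,-1,0],[1,-1,-1,0,0,-1,0],[0,1,-1,1,0,0,1],[0,1,-1,-1,0,0,-1]]),
    ([1,0,0,1,0,-1,1], [[0,0,2,0,0,0,0],[1,0,0,1,0,-1,1],[1,0,0,-1,0,1,1],[1,1,0,0,-1,0,-1],[1,-1,0,0,1,0,-1],[0,1,0,1,1,1,0],[0,1,0,-1,1,-1,0]]),
    ([1,0,0,1,0,-1,-1], [[0,0,1,0,-1,1,-1],[1,0,0,1,0,-1,-1],[1,-1,0,0,-1,0,1],[1,1,-1,0,0,1,0],[0,1,1,1,0,0,1],[1,0,1,-1,1,0,0],[0,1,0,-1,-1,-1,0]]),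
    ([1,0,0,-1,0,1,1], [[0,2,0,0,0,0,0],[0,0,2,0,0,0,0],[0,0,0,0,2,0,0],[1,0,0,1,0,1,-1],[1,0,0,1,0,-1,1],[1,0,0,-1,0,1,1],[1,0,0,-1,0,-1,-1]]),
    ([1,0,0,-1,0,1,-1], [[0,0,1,0,-1,1,1],[1,0,0,-1,0,1,-1],[1,1,0,0,1,0,1],[1,-1,1,0,0,-1,0],[0,1,1,1,0,0,-1],[1,0,-1,1,-1,0,0],[0,1,0,-1,-1,-1,0]]),
    ([1,0,0,-1,0,-1,1], [[0,0,1,0,-1,-1,-1],[1,0,0,-1,0,-1,1],[1,1,0,0,1,0,-1],[1,-1,1,0,0,1,0],[0,1,1,1,0,0,1],[1,0,-1,1,-1,0,0],[0,1,0,-1,-1,1,0]]),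
    ([1,0,0,-1,0,-1,-1], [[0,2,0,0,0,0,0],[0,0,1,0,1,1,-1],[0,0,1,0,1,-1,1],[1,0,0,-1,0,1,1],[1,0,0,-1,0,-1,-1],[1,0,1,1,-1,0,0],[1,0,-1,1,1,0,0]]),
    ([1,1,0,0,1,0,1], [[0,0,1,0,1,-1,-1],[1,0,0,-1,0,1,-1],[1,1,0,0,1,0,1],[1,-1,-1,0,0,-1,0],[0,1,-1,1,0,0,-1],[1,0,1,1,-1,0,0],[0,1,0,-1,-1,-1,0]]),
    ([1,1,0,0,1,0,-1], [[0,0,2,0,0,0,0],[1,0,0,1,0,1,1],[1,0,0,-1,0,-1,1],[1,1,0,0,1,0,-1],[1,-1,0,0,-1,0,-1],[0,1,0,1,-1,-1,0],[0,1,0,-1,-1,1,0]]),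
    ([1,1,0,0,-1,0,1], [[0,0,0,0,0,2,0],[1,1,0,0,-1,0,1],[1,-1,0,0,-1,0,-1],[0,1,1,1,0,0,-1],[0,1,-1,-1,0,0,-1],[1,0,1,-1,1,0,0],[1,0,-1,1,1,0,0]]),
    ([1,1,0,0,-1,0,-1], [[0,0,1,0,1,-1,-1],[1,0,0,1,0,-1,1],[1,1,0,0,-1,0,-1],[1,-1,1,0,0,1,0],[0,1,1,-1,0,0,1],[1,0,-1,-1,1,0,0],[0,1,0,1,1,1,0]]),
    ([1,-1,0,0,1,0,1], [[0,0,0,2,0,0,0],[0,0,1,0,1,1,-1],[0,0,1,0,-1,1,1],[1,-1,0,0,1,0,1],[1,-1,0,0,-1,0,-1],[1,1,1,0,0,-1,0],[1,1,-1,0,0,1,0]]),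
    ([1,-1,0,0,1,0,-1], [[0,0,1,0,-1,-1,-1],[1,0,0,1,0,-1,1],[1,-1,0,0,1,0,-1],[1,1,1,0,0,1,0],[0,1,-1,1,0,0,-1],[1,0,-1,-1,-1,0,0],[0,1,0,-1,1,-1,0]]),
    ([1,-1,0,0,-1,0,1], [[0,0,1,0,1,-1,1],[1,0,0,1,0,-1,-1],[1,-1,0,0,-1,0,1],[1,1,1,0,0,1,0],[0,1,-1,1,0,0,1],[1,0,-1,-1,1,0,0],[0,1,0,-1,-1,-1,0]]),
    ([1,-1,0,0,-1,0,-1], [[0,0,2,0,0,0,0],[0,0,0,2,0,0,0],[0,0,0,0,0,2,0],[1,1,0,0,1,0,-1],[1,1,0,0,-1,0,1],[1,-1,0,0,1,0,1],[1,-1,0,0,-1,0,-1]]),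
    ([1,1,1,0,0,1,0], [[0,0,0,2,0,0,0],[0,0,1,0,1,-1,1],[0,0,1,0,-1,-1,-1],[1,-1,0,0,1,0,-1],[1,-1,0,0,-1,0,1],[1,1,1,0,0,1,0],[1,1,-1,0,0,-1,0]]),
    ([1,1,1,0,0,-1,0], [[0,0,1,0,-1,1,1],[1,0,0,1,0,1,-1],[1,-1,0,0,1,0,1],[1,1,1,0,0,-1,0],[0,1,-1,1,0,0,1],[1,0,-1,-1,-1,0,0],[0,1,0,-1,1,1,0]]),
    ([1,1,-1,0,0,1,0], [[0,0,1,0,1,1,-1],[1,0,0,1,0,-1,-1],[1,-1,0,0,1,0,1],[1,1,-1,0,0,1,0],[0,1,1,1,0,0,1],[1,0,1,-1,-1,0,0],[0,1,0,-1,1,-1,0]]),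
    ([1,1,-1,0,0,-1,0], [[0,0,0,2,0,0,0],[0,0,0,0,2,0,0],[0,0,0,0,0,0,2],[1,1,1,0,0,1,0],[1,1,-1,0,0,-1,0],[1,-1,1,0,0,-1,0],[1,-1,-1,0,0,1,0]]),
    ([1,-1,1,0,0,1,0], [[0,0,1,0,1,-1,-1],[1,0,0,-1,0,-1,1],[1,1,0,0,-1,0,-1],[1,-1,1,0,0,1,0],[0,1,1,1,0,0,1],[1,0,-1,1,1,0,0],[0,1,0,-1,1,1,0]]),
    ([1,-1,1,0,0,-1,0], [[0,0,0,0,2,0,0],[1,0,0,1,0,1,1],[1,0,0,-1,0,1,-1],[1,1,-1,0,0,-1,0],[1,-1,1,0,0,-1,0],[0,1,1,1,0,0,-1],[0,1,1,-1,0,0,1]]),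
    ([1,-1,-1,0,0,1,0], [[0,0,0,0,0,0,2],[1,1,-1,0,0,-1,0],[1,-1,-1,0,0,1,0],[1,0,1,1,-1,0,0],[1,0,1,-1,1,0,0],[0,1,0,1,1,1,0],[0,1,0,-1,-1,1,0]]),
    ([1,-1,-1,0,0,-1,0], [[0,0,1,0,1,-1,-1],[1,0,0,1,0,1,-1],[1,1,0,0,1,0,1],[1,-1,-1,0,0,-1,0],[0,1,-1,-1,0,0,-1],[1,0,1,-1,-1,0,0],[0,1,0,1,-1,-1,0]]),
    ([0,1,1,1,0,0,1], [[0,0,0,0,2,0,0],[1,0,0,1,0,-1,-1],[1,0,0,-1,0,-1,1],[1,1,-1,0,0,1,0],[1,-1,1,0,0,1,0],[0,1,1,1,0,0,1],[0,1,1,-1,0,0,-1]]),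
    ([0,1,1,1,0,0,-1], [[0,0,1,0,1,1,1],[1,0,0,-1,0,1,-1],[1,1,0,0,-1,0,1],[1,-1,1,0,0,-1,0],[0,1,1,1,0,0,-1],[1,0,-1,1,1,0,0],[0,1,0,-1,1,-1,0]]),
    ([0,1,1,-1,0,0,1], [[0,0,1,0,1,1,-1],[1,0,0,1,0,1,1],[1,1,0,0,-1,0,-1],[1,-1,1,0,0,-1,0],[0,1,1,-1,0,0,1],[1,0,-1,-1,1,0,0],[0,1,0,1,1,-1,0]]),
    ([0,1,1,-1,0,0,-1], [[2,0,0,0,0,0,0],[0,0,0,0,2,0,0],[0,0,0,0,0,2,0],[0,1,1,1,0,0,1],[0,1,1,-1,0,0,-1],[0,1,-1,1,0,0,-1],[0,1,-1,-1,0,0,1]]),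
    ([0,1,-1,1,0,0,1], [[0,0,1,0,1,1,1],[1,0,0,1,0,1,-1],[1,-1,0,0,-1,0,1],[1,1,1,0,0,-1,0],[0,1,-1,1,0,0,1],[1,0,-1,-1,1,0,0],[0,1,0,-1,-1,1,0]]),
    ([0,1,-1,1,0,0,-1], [[0,0,0,0,0,2,0],[1,1,0,0,1,0,1],[1,-1,0,0,1,0,-1],[0,1,1,-1,0,0,-1],[0,1,-1,1,0,0,-1],[1,0,1,1,-1,0,0],[1,0,-1,-1,-1,0,0]]),
    ([0,1,-1,-1,0,0,1], [[2,0,0,0,0,0,0],[0,0,1,0,1,-1,1],[0,0,1,0,-1,1,1],[0,1,1,-1,0,0,-1],[0,1,-1,-1,0,0,1],[0,1,0,1,1,1,0],[0,1,0,1,-1,-1,0]]),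
    ([0,1,-1,-1,0,0,-1], [[0,0,1,0,-1,-1,-1],[1,0,0,1,0,1,-1],[1,1,0,0,-1,0,1],[1,-1,-1,0,0,-1,0],[0,1,-1,-1,0,0,-1],[1,0,1,-1,1,0,0],[0,1,0,1,1,-1,0]]),
    ([1,0,1,1,1,0,0], [[0,2,0,0,0,0,0],[0,0,0,0,0,2,0],[0,0,0,0,0,0,2],[1,0,1,1,1,0,0],[1,0,1,-1,-1,0,0],[1,0,-1,1,-1,0,0],[1,0,-1,-1,1,0,0]]),
    ([1,0,1,1,-1,0,0], [[0,0,1,0,1,1,-1],[1,0,0,-1,0,-1,-1],[1,1,0,0,1,0,1],[1,-1,-1,0,0,1,0],[0,1,-1,1,0,0,-1],[1,0,1,1,-1,0,0],[0,1,0,-1,-1,1,0]]),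
    ([1,0,1,-1,1,0,0], [[0,0,1,0,-1,1,-1],[1,0,0,1,0,-1,-1],[1,1,0,0,-1,0,1],[1,-1,-1,0,0,1,0],[0,1,-1,-1,0,0,-1],[1,0,1,-1,1,0,0],[0,1,0,1,1,1,0]]),
    ([1,0,1,-1,-1,0,0], [[0,0,0,0,0,0,2],[1,1,-1,0,0,1,0],[1,-1,-1,0,0,-1,0],[1,0,1,1,1,0,0],[1,0,1,-1,-1,0,0],[0,1,0,1,-1,-1,0],[0,1,0,-1,1,-1,0]]),
    ([1,0,-1,1,1,0,0], [[0,0,1,0,1,-1,1],[1,0,0,-1,0,-1,-1],[1,1,0,0,-1,0,1],[1,-1,1,0,0,1,0],[0,1,1,1,0,0,-1],[1,0,-1,1,1,0,0],[0,1,0,-1,1,1,0]]),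
    ([1,0,-1,1,-1,0,0], [[0,2,0,0,0,0,0],[0,0,1,0,-1,1,1],[0,0,1,0,-1,-1,-1],[1,0,0,-1,0,1,-1],[1,0,0,-1,0,-1,1],[1,0,1,1,1,0,0],[1,0,-1,1,-1,0,0]]),
    ([1,0,-1,-1,1,0,0], [[0,0,0,0,0,2,0],[1,1,0,0,-1,0,-1],[1,-1,0,0,-1,0,1],[0,1,1,-1,0,0,1],[0,1,-1,1,0,0,1],[1,0,1,1,1,0,0],[1,0,-1,-1,1,0,0]]),
    ([1,0,-1,-1,-1,0,0], [[0,0,1,0,-1,1,-1],[1,0,0,1,0,1,1],[1,-1,0,0,1,0,-1],[1,1,1,0,0,-1,0],[0,1,-1,1,0,0,-1],[1,0,-1,-1,-1,0,0],[0,1,0,-1,1,1,0]]),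
    ([0,1,0,1,1,1,0], [[0,0,1,0,-1,1,1],[1,0,0,1,0,-1,1],[1,1,0,0,-1,0,-1],[1,-1,-1,0,0,1,0],[0,1,-1,-1,0,0,1],[1,0,1,-1,1,0,0],[0,1,0,1,1,1,0]]),
    ([0,1,0,1,1,-1,0], [[2,0,0,0,0,0,0],[0,0,1,0,1,1,-1],[0,0,1,0,-1,-1,-1],[0,1,1,-1,0,0,1],[0,1,-1,-1,0,0,-1],[0,1,0,1,1,-1,0],[0,1,0,1,-1,1,0]]),
    ([0,1,0,1,-1,1,0], [[2,0,0,0,0,0,0],[0,0,2,0,0,0,0],[0,0,0,0,0,0,2],[0,1,0,1,1,-1,0],[0,1,0,1,-1,1,0],[0,1,0,-1,1,1,0],[0,1,0,-1,-1,-1,0]]),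
    ([0,1,0,1,-1,-1,0], [[0,0,1,0,1,-1,1],[1,0,0,1,0,1,1],[1,1,0,0,1,0,-1],[1,-1,-1,0,0,-1,0],[0,1,-1,-1,0,0,1],[1,0,1,-1,-1,0,0],[0,1,0,1,-1,-1,0]]),
    ([0,1,0,-1,1,1,0], [[0,0,0,0,0,0,2],[1,1,1,0,0,-1,0],[1,-1,1,0,0,1,0],[1,0,-1,1,1,0,0],[1,0,-1,-1,-1,0,0],[0,1,0,1,-1,1,0],[0,1,0,-1,1,1,0]]),
    ([0,1,0,-1,1,-1,0], [[0,0,1,0,1,1,1],[1,0,0,1,0,-1,1],[1,-1,0,0,1,0,-1],[1,1,-1,0,0,1,0],[0,1,1,1,0,0,-1],[1,0,1,-1,-1,0,0],[0,1,0,-1,1,-1,0]]),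
    ([0,1,0,-1,-1,1,0], [[0,0,1,0,1,1,1],[1,0,0,-1,0,-1,1],[1,1,0,0,1,0,-1],[1,-1,-1,0,0,1,0],[0,1,-1,1,0,0,1],[1,0,1,1,-1,0,0],[0,1,0,-1,-1,1,0]]),
    ([0,1,0,-1,-1,-1,0], [[0,0,2,0,0,0,0],[1,0,0,1,0,-1,-1],[1,0,0,-1,0,1,-1],[1,1,0,0,1,0,1],[1,-1,0,0,-1,0,1],[0,1,0,1,-1,1,0],[0,1,0,-1,-1,-1,0]])]"

definition Ul :: "int list list" where
  "Ul = [[2,2,0,0,0,0,0],
    [2,-2,0,0,0,0,0],
    [-2,2,0,0,0,0,0],
    [-2,-2,0,0,0,0,0],
    [2,0,2,0,0,0,0],
    [2,0,-2,0,0,0,0],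
    [-2,0,2,0,0,0,0],
    [-2,0,-2,0,0,0,0],
    [2,0,0,2,0,0,0],
    [2,0,0,-2,0,0,0],
    [-2,0,0,2,0,0,0],
    [-2,0,0,-2,0,0,0],
    [2,0,0,0,2,0,0],
    [2,0,0,0,-2,0,0],
    [-2,0,0,0,2,0,0],
    [-2,0,0,0,-2,0,0],
    [2,0,0,0,0,2,0],
    [2,0,0,0,0,-2,0],
    [-2,0,0,0,0,2,0],
    [-2,0,0,0,0,-2,0],
    [2,0,0,0,0,0,2],
    [2,0,0,0,0,0,-2],
    [-2,0,0,0,0,0,2],
    [-2,0,0,0,0,0,-2],
    [0,2,2,0,0,0,0],
    [0,2,-2,0,0,0,0],
    [0,-2,2,0,0,0,0],
    [0,-2,-2,0,0,0,0],
    [0,2,0,2,0,0,0],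
    [0,2,0,-2,0,0,0],
    [0,-2,0,2,0,0,0],
    [0,-2,0,-2,0,0,0],
    [0,2,0,0,2,0,0],
    [0,2,0,0,-2,0,0],
    [0,-2,0,0,2,0,0],
    [0,-2,0,0,-2,0,0],
    [0,2,0,0,0,2,0],
    [0,2,0,0,0,-2,0],
    [0,-2,0,0,0,2,0],
    [0,-2,0,0,0,-2,0],
    [0,2,0,0,0,0,2],
    [0,2,0,0,0,0,-2],
    [0,-2,0,0,0,0,2],
    [0,-2,0,0,0,0,-2],
    [0,0,2,2,0,0,0],
    [0,0,2,-2,0,0,0],
    [0,0,-2,2,0,0,0],
    [0,0,-2,-2,0,0,0],
    [0,0,2,0,2,0,0],
    [0,0,2,0,-2,0,0],
    [0,0,-2,0,2,0,0],
    [0,0,-2,0,-2,0,0],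
    [0,0,2,0,0,2,0],
    [0,0,2,0,0,-2,0],
    [0,0,-2,0,0,2,0],
    [0,0,-2,0,0,-2,0],
    [0,0,2,0,0,0,2],
    [0,0,2,0,0,0,-2],
    [0,0,-2,0,0,0,2],
    [0,0,-2,0,0,0,-2],
    [0,0,0,2,2,0,0],
    [0,0,0,2,-2,0,0],
    [0,0,0,-2,2,0,0],
    [0,0,0,-2,-2,0,0],
    [0,0,0,2,0,2,0],
    [0,0,0,2,0,-2,0],
    [0,0,0,-2,0,2,0],
    [0,0,0,-2,0,-2,0],
    [0,0,0,2,0,0,2],
    [0,0,0,2,0,0,-2],
    [0,0,0,-2,0,0,2],
    [0,0,0,-2,0,0,-2],
    [0,0,0,0,2,2,0],
    [0,0,0,0,2,-2,0],
    [0,0,0,0,-2,2,0],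
    [0,0,0,0,-2,-2,0],
    [0,0,0,0,2,0,2],
    [0,0,0,0,2,0,-2],
    [0,0,0,0,-2,0,2],
    [0,0,0,0,-2,0,-2],
    [0,0,0,0,0,2,2],
    [0,0,0,0,0,2,-2],
    [0,0,0,0,0,-2,2],
    [0,0,0,0,0,-2,-2]]"

definition ip :: "int list \<Rightarrow> int list \<Rightarrow> int" where
  "ip x y = sum_list (map2 (*) x y)"

definition nbr :: "int list \<Rightarrow> int list list" where
  "nbr x = the (map_of Nl x)"

definition sm :: "int \<Rightarrow> int list \<Rightarrow> int list" where
  "sm s x = map ((*) s) x"

definition z7 :: "int list" where "z7 = replicate 7 0"

definition "Gchk = list_all (\<lambda>x. list_all (\<lambda>y. x = y \<or> ip x y \<in> {-2,0,2}) Lr) Lr"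
definition "Mchk = list_all (\<lambda>x. list_all (\<lambda>y. x = y \<or> ip x y \<in> {-8,-4,0,4}) Ul) Ul"
definition "Hchk = list_all (\<lambda>x. list_all (\<lambda>y. ip x y \<in> {-4,-2,0,2,4}) Ul) Lr"
definition "F1 = list_all (\<lambda>(x,ys). list_all (\<lambda>y. list_all (\<lambda>y'. y = y' \<or> ip y y' = 0) ys) ys) Nl"
definition "F2 = list_all (\<lambda>(x,ys). list_all (\<lambda>(x',ys'). x = x' \<or> ip x x' = 0 \<or> list_all (\<lambda>y. y \<notin> set ys') ys) Nl) Nl"
definition "F3 = (distinct (map fst Nl) \<and> map fst Nl = Lr \<and> distinct Lr \<and> length Lr = 63 \<and>
   list_all (\<lambda>(x,ys). distinct ys \<and> length ys = 7 \<and> set ys \<subseteq> set Lr) Nl)"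
definition "F4 = (list_all (\<lambda>x. length x = 7 \<and> ip x x = 4) Lr \<and> list_all (\<lambda>x. length x = 7 \<and> ip x x = 8) Ul
   \<and> distinct Ul \<and> length Ul = 84)"

lemma Gchk: "Gchk" unfolding Gchk_def by code_simp
lemma Mchk: "Mchk" unfolding Mchk_def by code_simp
lemma Hchk: "Hchk" unfolding Hchk_def by code_simp
lemma F1: "F1" unfolding F1_def by code_simp
lemma F2: "F2" unfolding F2_def by code_simp
lemma F3: "F3" unfolding F3_def by code_simp
lemma F4: "F4" unfolding F4_def by code_simp


lemma ip_append: "length a = length c \<Longrightarrow> ip (a @ b) (c @ d) = ip a c + ip b d"
  by (simp add: ip_def)

lemma ip_comm: "ip x y = ip y x"
  unfolding ip_def
proof (induction x arbitrary: y)
  case Nil then show ?case by simp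
next
  case (Cons a x) then show ?case by (cases y) (simp_all add: algebra_simps)
qed

lemma ip_sm: "ip (sm s x) (sm t y) = s * t * ip x y"
  unfolding ip_def sm_def
proof (induction x arbitrary: y)
  case Nil then show ?case by simp
next
  case (Cons a x) then show ?case by (cases y) (simp_all add: algebra_simps)
qed

lemma sm1: "sm 1 x = x" by (induct x) (simp_all add: sm_def)

lemma ip_sm1: "ip (sm s x) u = s * ip x u"
  using ip_sm[of s x 1 u] by (simp add: sm1)

lemma ip_rep0: "ip (replicate n 0) u = 0"
  unfolding ip_def
proof (induction n arbitrary: u)
  case 0 then show ?case by simp
next
  case (Suc n) then show ?case by (cases u) simp_all
qed

lemma ip_z7: "ip z7 u = 0" "ip u z7 = 0"
  using ip_rep0[of 7 u] ip_comm[of u z7] by (simp_all add: z7_def)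

lemma len_sm[simp]: "length (sm s x) = length x" by (simp add: sm_def)
lemma len_z7[simp]: "length z7 = 7" by (simp add: z7_def)

lemma ip_nth: "length x = length y \<Longrightarrow> ip x y = (\<Sum>k<length x. x!k * y!k)"
  unfolding ip_def
proof (induction x arbitrary: y)
  case Nil then show ?case by simp
next
  case (Cons a x)
  then obtain b y' where y: "y = b # y'" "length x = length y'" by (cases y) auto
  show ?case using Cons.IH[OF y(2)] y by (simp del: sum.lessThan_Suc add: sum.lessThan_Suc_shift)
qed

lemma G: "x \<in> set Lr \<Longrightarrow> y \<in> set Lr \<Longrightarrow> x \<noteq> y \<Longrightarrow> ip x y \<in> {-2,0,2}"
  using Gchk by (auto simp: Gchk_def list_all_iff)
lemma M: "x \<in> set Ul \<Longrightarrow> y \<in> set Ul \<Longrightarrow> x \<noteq> y \<Longrightarrow> ip x y \<in> {-8,-4,0,4}"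
  using Mchk by (auto simp: Mchk_def list_all_iff)
lemma H: "x \<in> set Lr \<Longrightarrow> y \<in> set Ul \<Longrightarrow> ip x y \<in> {-4,-2,0,2,4}"
  using Hchk by (auto simp: Hchk_def list_all_iff)
lemma Lr4: "x \<in> set Lr \<Longrightarrow> length x = 7 \<and> ip x x = 4"
  using F4 by (auto simp: F4_def list_all_iff)
lemma Ul8: "x \<in> set Ul \<Longrightarrow> length x = 7 \<and> ip x x = 8"
  using F4 by (auto simp: F4_def list_all_iff)

lemma nbr_in: assumes "x \<in> set Lr" shows "(x, nbr x) \<in> set Nl"
proof -
  have d: "distinct (map fst Nl)" and e: "map fst Nl = Lr" using F3 by (auto simp: F3_def)
  have "x \<in> fst ` set Nl" using assms e by (metis list.set_map)
  then obtain p where "p \<in> set Nl" "x = fst p" by blast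
  then have ys: "(x, snd p) \<in> set Nl" by simp
  then have "map_of Nl x = Some (snd p)" using map_of_is_SomeI[OF d] by blast
  then show ?thesis using ys by (simp add: nbr_def)
qed

lemma nbr_props: "x \<in> set Lr \<Longrightarrow> distinct (nbr x) \<and> length (nbr x) = 7 \<and> set (nbr x) \<subseteq> set Lr"
  using nbr_in[of x] F3 by (auto simp: F3_def list_all_iff)

lemma F1': "x \<in> set Lr \<Longrightarrow> y \<in> set (nbr x) \<Longrightarrow> y' \<in> set (nbr x) \<Longrightarrow> y \<noteq> y' \<Longrightarrow> ip y y' = 0"
  using nbr_in[of x] F1 by (fastforce simp: F1_def list_all_iff)

lemma F2': "x \<in> set Lr \<Longrightarrow> x' \<in> set Lr \<Longrightarrow> x \<noteq> x' \<Longrightarrow> ip x x' \<noteq> 0 \<Longrightarrow>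
   y \<in> set (nbr x) \<Longrightarrow> y \<in> set (nbr x') \<Longrightarrow> False"
  using nbr_in[of x] nbr_in[of x'] F2 unfolding F2_def list_all_iff by fastforce

lemma sgn_prod: "(s::int) \<in> {1,-1} \<Longrightarrow> s' \<in> {1,-1} \<Longrightarrow> s * s' \<in> {1,-1}" by auto

lemma AA:
  assumes x: "x \<in> set Lr" and y: "y \<in> set (nbr x)" and x': "x' \<in> set Lr" and y': "y' \<in> set (nbr x')"
    and s: "s \<in> {1,-1}" and t: "t \<in> {1,-1}" and s': "s' \<in> {1,-1}" and t': "t' \<in> {1,-1}"
    and ne: "\<not> (x = x' \<and> y = y' \<and> s = s' \<and> t = t')"
  shows "ip (sm s x @ sm t y) (sm s' x' @ sm t' y') \<in> {0,2,-2,4,-4,-8}"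
proof -
  have yL: "y \<in> set Lr" "y' \<in> set Lr" using nbr_props x x' y y' by auto
  have eq: "ip (sm s x @ sm t y) (sm s' x' @ sm t' y') = s * s' * ip x x' + t * t' * ip y y'"
    using Lr4[OF x] Lr4[OF x'] by (simp add: ip_append ip_sm)
  have ss: "s * s' \<in> {1,-1}" "t * t' \<in> {1,-1}" using s s' t t' by auto
  have ss1: "s = s' \<longleftrightarrow> s * s' = 1" "t = t' \<longleftrightarrow> t * t' = 1" using s s' t t' by auto
  show ?thesis
  proof (cases "x = x'")
    case True
    then have a: "ip x x' = 4" using Lr4[OF x] by simp
    show ?thesis
    proof (cases "y = y'")
      case True
      then have "ip y y' = 4" using Lr4[OF yL(1)] by simp
      with a eq ss ss1 ne \<open>x = x'\<close> True show ?thesis by auto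
    next
      case False
      then have "ip y y' = 0" using F1'[OF x y] y' \<open>x = x'\<close> by simp
      with a eq ss show ?thesis by auto
    qed
  next
    case False
    note xx = False
    show ?thesis
    proof (cases "ip x x' = 0")
      case True
      have "ip y y' \<in> {4, -2, 0, 2}" using G[OF yL] Lr4[OF yL(1)] by (cases "y = y'") auto
      with True eq ss show ?thesis by auto
    next
      case False
      then have "y \<noteq> y'" using F2'[OF x x' xx False y] y' by auto
      then have "ip y y' \<in> {-2,0,2}" using G[OF yL] by simp
      moreover have "ip x x' \<in> {-2,2}" using G[OF x x' xx] False by auto
      ultimately show ?thesis using eq ss by auto
    qed
  qed
qed

definition "DA = Sigma (set Lr) (\<lambda>x. set (nbr x)) \<times> ({1,-1::int} \<times> {1,-1::int})"
definition fA :: "(int list \<times> int list) \<times> (int \<times> int) \<Rightarrow> int list" where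
  "fA p = (case p of ((x,y),(s,t)) \<Rightarrow> sm s x @ sm t y)"
definition "WB = (\<lambda>u. u @ z7) ` set Ul"
definition "WC = (\<lambda>u. z7 @ u) ` set Ul"
definition "W = fA ` DA \<union> WB \<union> WC"

lemma fA_pair: "p \<in> DA \<Longrightarrow> q \<in> DA \<Longrightarrow> p \<noteq> q \<Longrightarrow> ip (fA p) (fA q) \<in> {0,2,-2,4,-4,-8}"
proof -
  assume a: "p \<in> DA" "q \<in> DA" "p \<noteq> q"
  obtain x y s t where p: "p = ((x,y),(s,t))" by (metis prod.collapse)
  obtain x' y' s' t' where q: "q = ((x',y'),(s',t'))" by (metis prod.collapse)
  show ?thesis using a unfolding p q DA_def fA_def
    by (simp only: prod.case) (rule AA, auto)
qed

lemma fA_self: "p \<in> DA \<Longrightarrow> ip (fA p) (fA p) = 8 \<and> length (fA p) = 14"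
proof -
  assume "p \<in> DA"
  then obtain x y s t where p: "p = ((x,y),(s,t))" "x \<in> set Lr" "y \<in> set (nbr x)" "s \<in> {1,-1}" "t \<in> {1,-1}"
    unfolding DA_def by auto
  have "y \<in> set Lr" using nbr_props p by auto
  then show ?thesis using p Lr4[OF p(2)] Lr4[of y] by (auto simp: fA_def ip_append ip_sm)
qed

lemma fA_inj: "inj_on fA DA"
proof (rule inj_onI, rule ccontr)
  fix p q assume "p \<in> DA" "q \<in> DA" "fA p = fA q" "p \<noteq> q"
  then show False using fA_pair[of p q] fA_self[of p] by auto
qed

lemma fA_B: assumes "p \<in> DA" "u \<in> set Ul"
  shows "ip (fA p) (u @ z7) \<in> {-4,-2,0,2,4}" "ip (fA p) (z7 @ u) \<in> {-4,-2,0,2,4}"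
proof -
  obtain x y s t where p: "p = ((x,y),(s,t))" "x \<in> set Lr" "y \<in> set (nbr x)" "s \<in> {1,-1}" "t \<in> {1,-1}"
    using assms unfolding DA_def by auto
  have yL: "y \<in> set Lr" using nbr_props p by auto
  have "ip (fA p) (u @ z7) = s * ip x u" using p Lr4[OF p(2)] Ul8[OF assms(2)]
    by (simp add: fA_def ip_append ip_sm1 ip_z7)
  then show "ip (fA p) (u @ z7) \<in> {-4,-2,0,2,4}" using H[OF p(2) assms(2)] p by auto
  have "ip (fA p) (z7 @ u) = t * ip y u" using p Lr4[OF p(2)] Ul8[OF assms(2)]
    by (simp add: fA_def ip_append ip_sm1 ip_z7)
  then show "ip (fA p) (z7 @ u) \<in> {-4,-2,0,2,4}" using H[OF yL assms(2)] p by auto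
qed

lemma W_len: "v \<in> W \<Longrightarrow> length v = 14"
  using fA_self Ul8 unfolding W_def WB_def WC_def by auto

lemma W_self: "v \<in> W \<Longrightarrow> ip v v = 8"
  using fA_self Ul8 unfolding W_def WB_def WC_def by (auto simp: ip_append ip_z7)

lemma W_pair: assumes "v \<in> W" "w \<in> W" "v \<noteq> w" shows "ip v w \<in> {0,2,-2,4,-4,-8}"
proof -
  have BB: "ip (u @ z7) (u' @ z7) \<in> {0,2,-2,4,-4,-8}" "ip (z7 @ u) (z7 @ u') \<in> {0,2,-2,4,-4,-8}"
    if "u \<in> set Ul" "u' \<in> set Ul" "u \<noteq> u'" for u u'
    using M[OF that] Ul8[OF that(1)] Ul8[OF that(2)] by (auto simp: ip_append ip_z7)
  have BC: "ip (u @ z7) (z7 @ u') = 0" "ip (z7 @ u) (u' @ z7) = 0" if "u \<in> set Ul" "u' \<in> set Ul" for u u'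
    using Ul8[OF that(1)] Ul8[OF that(2)] by (auto simp: ip_append ip_z7)
  from assms show ?thesis unfolding W_def WB_def WC_def
    apply (elim UnE imageE)
    using fA_pair fA_B BB BC ip_comm
    by (auto, blast+)
qed

lemma card_DA: "card DA = 1764"
proof -
  have dL: "distinct Lr" "length Lr = 63" using F3 by (auto simp: F3_def)
  have "card (Sigma (set Lr) (\<lambda>x. set (nbr x))) = (\<Sum>x\<in>set Lr. card (set (nbr x)))"
    by (rule card_SigmaI) auto
  also have "\<dots> = (\<Sum>x\<in>set Lr. 7)"
    by (rule sum.cong) (auto dest: nbr_props simp: distinct_card)
  also have "\<dots> = 441" using dL by (simp add: distinct_card)
  finally have "card (Sigma (set Lr) (\<lambda>x. set (nbr x))) = 441" .
  moreover have "card ({1,-1::int} \<times> {1,-1::int}) = 4" by (simp add: card_cartesian_product)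
  ultimately show ?thesis unfolding DA_def by (simp add: card_cartesian_product)
qed

lemma card_W: "card W = 1932"
proof -
  have dU: "card (set Ul) = 84" using F4 by (auto simp: F4_def distinct_card)
  have fin: "finite DA" unfolding DA_def by auto
  have cA: "card (fA ` DA) = 1764" using card_image[OF fA_inj] card_DA by simp
  have cB: "card WB = 84" unfolding WB_def by (subst card_image) (auto simp: inj_on_def dU)
  have cC: "card WC = 84" unfolding WC_def by (subst card_image) (auto simp: inj_on_def dU)
  have d1: "fA ` DA \<inter> WB = {}"
  proof (rule ccontr)
    assume "fA ` DA \<inter> WB \<noteq> {}"
    then obtain p u where "p \<in> DA" "u \<in> set Ul" "fA p = u @ z7" unfolding WB_def by auto
    then show False using fA_self[of p] fA_B(1)[of p u] by auto
  qed
  have d2: "(fA ` DA \<union> WB) \<inter> WC = {}"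
  proof (rule ccontr)
    assume "(fA ` DA \<union> WB) \<inter> WC \<noteq> {}"
    then obtain v u where v: "v \<in> fA ` DA \<union> WB" "u \<in> set Ul" "v = z7 @ u" unfolding WC_def by auto
    show False
    proof (cases "v \<in> WB")
      case True
      then obtain u' where "u' \<in> set Ul" "v = u' @ z7" unfolding WB_def by auto
      then show False using v Ul8[of u] Ul8[of u'] W_self[of v]
        by (auto simp: W_def WB_def ip_append ip_z7)
    next
      case False
      then obtain p where "p \<in> DA" "v = fA p" using v by auto
      then show False using v fA_self[of p] fA_B(2)[of p u] by auto
    qed
  qed
  have "card W = card (fA ` DA \<union> WB) + card WC"
    unfolding W_def by (rule card_Un_disjoint) (use fin d2 in \<open>auto simp: WB_def WC_def\<close>)
  also have "card (fA ` DA \<union> WB) = card (fA ` DA) + card WB"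
    by (rule card_Un_disjoint) (use fin d1 in \<open>auto simp: WB_def\<close>)
  finally show ?thesis using cA cB cC by simp
qed

lemma finite_W: "finite W"
  unfolding W_def DA_def WB_def WC_def by auto

lemma main_real:
  obtains S :: "(real^14) set" where "finite S" "card S = 1932" "\<forall>x\<in>S. norm x = 1"
    "\<forall>x\<in>S. \<forall>y\<in>S. x \<noteq> y \<longrightarrow> inner x y \<in> {0, 1/4, -1/4, 1/2, -1/2, -1}"
proof -
  obtain h :: "14 \<Rightarrow> nat" where h: "bij_betw h UNIV {0..<14}"
    using ex_bij_betw_finite_nat[of "UNIV::14 set"] by auto
  define E where "E l = (\<chi> i. real_of_int (l ! h i) / (2 * sqrt 2))" for l :: "int list"
  have s8: "sqrt 2 * sqrt 2 = (2::real)" by simp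
  have innerE: "inner (E l) (E l') = real_of_int (ip l l') / 8"
    if "length l = 14" "length l' = 14" for l l'
  proof -
    have "inner (E l) (E l') = (\<Sum>i\<in>UNIV. real_of_int (l ! h i * l' ! h i) / 8)"
      unfolding inner_vec_def E_def
      by (rule sum.cong) (auto simp: field_simps s8)
    also have "\<dots> = (\<Sum>k\<in>{0..<14}. real_of_int (l ! k * l' ! k) / 8)"
      using sum.reindex_bij_betw[OF h, of "\<lambda>k. real_of_int (l ! k * l' ! k) / 8"] by simp
    also have "\<dots> = real_of_int (\<Sum>k<14. l ! k * l' ! k) / 8"
      by (simp add: sum_divide_distrib atLeast0LessThan)
    also have "(\<Sum>k<14. l ! k * l' ! k) = ip l l'" using ip_nth[of l l'] that by simp
    finally show ?thesis .
  qed
  have n1: "inner (E l) (E l) = 1" if "l \<in> W" for l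
    using innerE[OF W_len[OF that] W_len[OF that]] W_self[OF that] by simp
  have inj: "inj_on E W"
  proof (rule inj_onI, rule ccontr)
    fix l l' assume a: "l \<in> W" "l' \<in> W" "E l = E l'" "l \<noteq> l'"
    have "inner (E l) (E l') = 1" using n1[OF a(1)] a(3) by simp
    then have "ip l l' = 8" using innerE[OF W_len[OF a(1)] W_len[OF a(2)]] by simp
    then show False using W_pair[OF a(1,2,4)] by auto
  qed
  show ?thesis
  proof (rule that[of "E ` W"])
    show "finite (E ` W)" using finite_W by simp
    show "card (E ` W) = 1932" using card_image[OF inj] card_W by simp
    show "\<forall>x\<in>E ` W. norm x = 1" using n1 by (auto simp: norm_eq_sqrt_inner)
    show "\<forall>x\<in>E ` W. \<forall>y\<in>E ` W. x \<noteq> y \<longrightarrow> inner x y \<in> {0, 1/4, -1/4, 1/2, -1/2, -1}"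
    proof (intro ballI impI)
      fix x y assume "x \<in> E ` W" "y \<in> E ` W" "x \<noteq> y"
      then obtain l l' where l: "l \<in> W" "l' \<in> W" "x = E l" "y = E l'" "l \<noteq> l'" by auto
      have "ip l l' \<in> {0,2,-2,4,-4,-8}" using W_pair[OF l(1,2,5)] .
      then show "inner x y \<in> {0, 1/4, -1/4, 1/2, -1/2, -1}"
        using innerE[OF W_len[OF l(1)] W_len[OF l(2)]] l by auto
    qed
  qed
qed

lemma floor_close: "\<lfloor>a::real\<rfloor> = \<lfloor>b\<rfloor> \<Longrightarrow> \<bar>a - b\<bar> < 1"
  using floor_correct[of a] floor_correct[of b] by linarith

lemma kiss_bound:
  assumes "finite T" "kissing_config (T :: (real^14) set)"
  shows "card T \<le> card (Pi UNIV (\<lambda>_::14. {-4..4::int}))"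
proof -
  define g where "g x = (\<lambda>i::14. \<lfloor>4 * x$i\<rfloor>)" for x :: "real^14"
  have fin: "finite (Pi UNIV (\<lambda>_::14. {-4..4::int}))"
    using finite_PiE[of "UNIV::14 set" "\<lambda>_. {-4..4::int}"] by (simp add: PiE_UNIV_domain)
  have n1: "norm x = 1" if "x \<in> T" for x using assms(2) that by (auto simp: kissing_config_def)
  have maps: "g ` T \<subseteq> Pi UNIV (\<lambda>_. {-4..4})"
  proof
    fix z assume "z \<in> g ` T"
    then obtain x where x: "x \<in> T" "z = g x" by auto
    have "\<bar>x$i\<bar> \<le> 1" for i using component_le_norm_cart[of x i] n1[OF x(1)] by simp
    then have "-4 \<le> 4 * x$i \<and> 4 * x$i \<le> 4" for i by (auto simp: abs_le_iff)
    then have "\<lfloor>4 * x$i\<rfloor> \<in> {-4..4}" for i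
      by (metis atLeastAtMost_iff floor_mono floor_neg_numeral floor_numeral)
    then show "z \<in> Pi UNIV (\<lambda>_. {-4..4})" using x by (auto simp: g_def)
  qed
  have inj: "inj_on g T"
  proof (rule inj_onI, rule ccontr)
    fix x y assume a: "x \<in> T" "y \<in> T" "g x = g y" "x \<noteq> y"
    have d: "(x$i - y$i)^2 < 1/16" for i
    proof -
      have "\<lfloor>4 * x$i\<rfloor> = \<lfloor>4 * y$i\<rfloor>" using a(3) unfolding g_def by metis
      then have "\<bar>4 * x$i - 4 * y$i\<bar> < 1" by (rule floor_close)
      then have b: "\<bar>x$i - y$i\<bar> < 1/4" unfolding abs_less_iff by linarith
      have "(x$i - y$i)^2 = \<bar>x$i - y$i\<bar>^2" by simp
      also have "\<dots> < (1/4)^2" by (rule power_strict_mono) (use b in auto)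
      finally show ?thesis by (simp add: power2_eq_square)
    qed
    have "inner (x-y) (x-y) = (\<Sum>i\<in>UNIV. (x$i - y$i)^2)"
      by (simp add: inner_vec_def power2_eq_square)
    also have "\<dots> < (\<Sum>i\<in>(UNIV::14 set). 1/16)"
      by (rule sum_strict_mono) (use d in auto)
    also have "\<dots> = 14/16" by simp
    finally have lt: "inner (x-y) (x-y) < 14/16" .
    have "inner (x-y) (x-y) = inner x x + inner y y - 2 * inner x y"
      by (simp add: inner_diff inner_commute algebra_simps)
    moreover have "inner x x = 1" "inner y y = 1"
      using n1[OF a(1)] n1[OF a(2)] by (simp_all add: power2_norm_eq_inner[symmetric])
    moreover have "inner x y \<le> 1/2" using assms(2) a by (auto simp: kissing_config_def)
    ultimately show False using lt by linarith
  qed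
  show ?thesis using card_inj_on_le[OF inj maps fin] .
qed

theorem mainTheorem8:
  shows "(\<exists>S :: (real ^ 14) set. finite S \<and> card S = 1932 \<and>
            (\<forall>x\<in>S. norm x = 1) \<and>
            (\<forall>x\<in>S. \<forall>y\<in>S. x \<noteq> y \<longrightarrow>
               inner x y \<in> {0, 1/4, -1/4, 1/2, -1/2, -1}))
         \<and> kissing_number TYPE(real ^ 14) \<ge> 1932"
proof -
  obtain S :: "(real^14) set" where S: "finite S" "card S = 1932" "\<forall>x\<in>S. norm x = 1"
    "\<forall>x\<in>S. \<forall>y\<in>S. x \<noteq> y \<longrightarrow> inner x y \<in> {0, 1/4, -1/4, 1/2, -1/2, -1}"
    by (rule main_real)
  have kc: "kissing_config S" unfolding kissing_config_def
  proof (intro conjI ballI impI)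
    fix x assume "x \<in> S" then show "norm x = 1" using S by auto
  next
    fix x y assume "x \<in> S" "y \<in> S" "x \<noteq> y"
    then have "inner x y \<in> {0, 1/4, -1/4, 1/2, -1/2, -1}" using S by auto
    then show "inner x y \<le> 1/2" by auto
  qed
  have bdd: "bdd_above {card S | S :: (real^14) set. finite S \<and> kissing_config S}"
    by (rule bdd_aboveI[where M = "card (Pi UNIV (\<lambda>_::14. {-4..4::int}))"]) (auto intro: kiss_bound)
  have mem: "1932 \<in> {card S | S :: (real^14) set. finite S \<and> kissing_config S}"
    using S kc by auto
  have "1932 \<le> kissing_number TYPE(real ^ 14)"
    unfolding kissing_number_def using cSup_upper[OF mem bdd] .
  then show ?thesis using S by blast
qed

end
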